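(* Let $\mathfrak{R}$ be an alternative ring with a nontrivial idempotent $e_1$ and Peirce decomposition $\mathfrak{R}=\mathfrak{R}_{11}\oplus\mathfrak{R}_{12}\oplus\mathfrak{R}_{21}\oplus\mathfrak{R}_{22}$, satisfying: (i) if $a_{11}\in\mathfrak{R}_{11}$, $a_{22}\in\mathfrak{R}_{22}$ and $[a_{11}+a_{22},\mathfrak{R}_{12}]=0$, then $a_{11}+a_{22}\in\mathcal{Z}(\mathfrak{R})$; (ii) if $a_{11}\in\mathfrak{R}_{11}$, $a_{22}\in\mathfrak{R}_{22}$ and $[a_{11}+a_{22},\mathfrak{R}_{21}]=0$, then $a_{11}+a_{22}\in\mathcal{Z}(\mathfrak{R})$. Let $\mathcal{D}$ be a multiplicative Lie-type derivation of $\mathfrak{R}$. Then for any $i\neq j$ and any $a_{ij},b_{ij}\in\mathfrak{R}_{ij}$, $\mathcal{D}(a_{ij}+b_{ij})=\mathcal{D}(a_{ij})+\mathcal{D}(b_{ij})$.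
   Context: Rings are not assumed associative or unital. The associator is $(x,y,z)=(xy)z-x(yz)$; $\mathfrak{R}$ is alternative if $(x,x,y)=0=(y,x,x)$ for all $x,y$. $[x,y]=xy-yx$ and $\mathcal{Z}(\mathfrak{R})=\{r: [r,x]=0\ \forall x\in\mathfrak{R}\}$. Define $p_1(x)=x$, $p_n(x_1,\dots,x_n)=[p_{n-1}(x_1,\dots,x_{n-1}),x_n]$. For $n\ge2$, a (not necessarily additive) map $\mathcal{D}\colon\mathfrak{R}\to\mathfrak{R}$ is a multiplicative Lie $n$-derivation if $\mathcal{D}(p_n(x_1,\dots,x_n))=\sum_{i=1}^n p_n(x_1,\dots,\mathcal{D}(x_i),\dots,x_n)$ for all $x_i\in\mathfrak{R}$; a multiplicative Lie-type derivation is a multiplicative Lie $n$-derivation for some $n\ge2$. A nontrivial idempotent is $e_1\ne0$ with $e_1^2=e_1$ which is not a multiplicative identity. With $e_2a:=a-e_1a$, $ae_2:=a-ae_1$, set $\mathfrak{R}_{ij}=e_i\mathfrak{R}e_j$ ($i,j=1,2$), so $\mathfrak{R}=\bigoplus_{i,j}\mathfrak{R}_{ij}$. *)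

theory Defs
  imports Main
begin

class nonassoc_ring = ab_group_add + times +
  assumes na_distrib_left: "a * (b + c) = a * b + a * c"
    and na_distrib_right: "(a + b) * c = a * c + b * c"

definition associator :: "'a::nonassoc_ring \<Rightarrow> 'a \<Rightarrow> 'a \<Rightarrow> 'a" where
  "associator x y z = (x * y) * z - x * (y * z)"

class alternative_ring = nonassoc_ring +
  assumes left_alternative: "(x * x) * y - x * (x * y) = 0"
    and right_alternative: "(y * x) * x - y * (x * x) = 0"

definition commutator :: "'a::nonassoc_ring \<Rightarrow> 'a \<Rightarrow> 'a" where
  "commutator x y = x * y - y * x"

definition center :: "'a::nonassoc_ring set" where
  "center = {r. \<forall>x. commutator r x = 0}"

text \<open>p_1(x) = x, p_n(x_1,...,x_n) = [p_{n-1}(x_1,...,x_{n-1}), x_n], on a nonempty list.\<close>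
definition lie_poly :: "'a::nonassoc_ring list \<Rightarrow> 'a" where
  "lie_poly xs = foldl commutator (hd xs) (tl xs)"

definition mult_lie_n_derivation :: "nat \<Rightarrow> ('a::nonassoc_ring \<Rightarrow> 'a) \<Rightarrow> bool" where
  "mult_lie_n_derivation n D \<longleftrightarrow>
     (\<forall>xs. length xs = n \<longrightarrow>
        D (lie_poly xs) = (\<Sum>i<n. lie_poly (xs[i := D (xs ! i)])))"

definition mult_lie_type_derivation :: "('a::nonassoc_ring \<Rightarrow> 'a) \<Rightarrow> bool" where
  "mult_lie_type_derivation D \<longleftrightarrow> (\<exists>n\<ge>2. mult_lie_n_derivation n D)"

definition nontrivial_idempotent :: "'a::nonassoc_ring \<Rightarrow> bool" where
  "nontrivial_idempotent e \<longleftrightarrow> e \<noteq> 0 \<and> e * e = e \<and> \<not> (\<forall>x. e * x = x \<and> x * e = x)"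

text \<open>e_1 a = e*a, e_2 a = a - e*a; a e_1 = a*e, a e_2 = a - a*e.\<close>
definition peirce_left :: "nat \<Rightarrow> 'a::nonassoc_ring \<Rightarrow> 'a \<Rightarrow> 'a" where
  "peirce_left i e a = (if i = 1 then e * a else a - e * a)"

definition peirce_right :: "nat \<Rightarrow> 'a::nonassoc_ring \<Rightarrow> 'a \<Rightarrow> 'a" where
  "peirce_right j e a = (if j = 1 then a * e else a - a * e)"

text \<open>R_ij = e_i R e_j, read as (e_i x) e_j (equal to e_i (x e_j) in alternative rings).\<close>
definition peirce :: "'a::nonassoc_ring \<Rightarrow> nat \<Rightarrow> nat \<Rightarrow> 'a set" where
  "peirce e i j = {peirce_right j e (peirce_left i e x) | x. True}"

end

theory Submission
  imports Defs
begin

lemma na_mult_zero_left: "0 * (a::'a::nonassoc_ring) = 0"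
proof -
  have "0*a = (0+0)*a" by simp
  also have "... = 0*a + 0*a" by (rule na_distrib_right)
  finally show ?thesis by simp
qed

lemma na_mult_zero_right: "(a::'a::nonassoc_ring) * 0 = 0"
proof -
  have "a*0 = a*(0+0)" by simp
  also have "... = a*0 + a*0" by (rule na_distrib_left)
  finally show ?thesis by simp
qed

lemma na_minus_mult_left: "(-a) * (b::'a::nonassoc_ring) = -(a*b)"
proof -
  have "(-a)*b + a*b = (-a + a)*b" by (rule na_distrib_right[symmetric])
  also have "... = 0" by (simp add: na_mult_zero_left)
  finally show ?thesis by (simp add: eq_neg_iff_add_eq_0)
qed

lemma na_minus_mult_right: "(a::'a::nonassoc_ring) * (-b) = -(a*b)"
proof -
  have "a*(-b) + a*b = a*(-b + b)" by (rule na_distrib_left[symmetric])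
  also have "... = 0" by (simp add: na_mult_zero_right)
  finally show ?thesis by (simp add: eq_neg_iff_add_eq_0)
qed

lemma na_diff_mult: "(a - b) * (c::'a::nonassoc_ring) = a*c - b*c"
proof -
  have "(a - b) * c = (a + -b) * c" by (simp only: diff_conv_add_uminus)
  also have "... = a*c + (-b)*c" by (rule na_distrib_right)
  also have "... = a*c - b*c" by (simp only: na_minus_mult_left diff_conv_add_uminus)
  finally show ?thesis .
qed

lemma na_mult_diff: "(c::'a::nonassoc_ring) * (a - b) = c*a - c*b"
proof -
  have "c * (a - b) = c * (a + -b)" by (simp only: diff_conv_add_uminus)
  also have "... = c*a + c*(-b)" by (rule na_distrib_left)
  also have "... = c*a - c*b" by (simp only: na_minus_mult_right diff_conv_add_uminus)
  finally show ?thesis .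
qed

lemmas na_simps = na_distrib_left na_distrib_right na_mult_zero_left na_mult_zero_right
  na_minus_mult_left na_minus_mult_right na_diff_mult na_mult_diff

lemma assoc_xxy: "associator x x (y::'a::alternative_ring) = 0"
  using left_alternative unfolding associator_def .

lemma assoc_yxx: "associator y x (x::'a::alternative_ring) = 0"
  using right_alternative unfolding associator_def .

lemma assoc_add1: "associator (x+y) z (w::'a::nonassoc_ring) = associator x z w + associator y z w"
  unfolding associator_def by (simp add: na_simps algebra_simps)
lemma assoc_add2: "associator z (x+y) (w::'a::nonassoc_ring) = associator z x w + associator z y w"
  unfolding associator_def by (simp add: na_simps algebra_simps)
lemma assoc_add3: "associator z w (x+y::'a::nonassoc_ring) = associator z w x + associator z w y"
  unfolding associator_def by (simp add: na_simps algebra_simps)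

lemma assoc_swap12: "associator x y (z::'a::alternative_ring) = - associator y x z"
proof -
  have "0 = associator (x+y) (x+y) z" by (simp add: assoc_xxy)
  also have "... = associator x y z + associator y x z"
    unfolding assoc_add1 assoc_add2 by (simp add: assoc_xxy)
  finally show ?thesis by (metis eq_neg_iff_add_eq_0)
qed

lemma assoc_swap23: "associator x y (z::'a::alternative_ring) = - associator x z y"
proof -
  have "0 = associator x (y+z) (y+z)" by (simp add: assoc_yxx)
  also have "... = associator x y z + associator x z y"
    unfolding assoc_add3 assoc_add2 by (simp add: assoc_yxx)
  finally show ?thesis by (metis eq_neg_iff_add_eq_0)
qed

lemma assoc_cyc: "associator x y (z::'a::alternative_ring) = associator y z x"
  using assoc_swap12[of x y z] assoc_swap23[of y x z] by simp

lemma assoc_swap13: "associator x y (z::'a::alternative_ring) = - associator z y x"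
  using assoc_cyc[of x y z] assoc_swap12[of y z x] by simp

lemma assoc_flex: "associator x y (x::'a::alternative_ring) = 0"
  using assoc_swap12[of x y x] assoc_yxx[of y x] by simp

lemma teich: "associator (w*x) y z - associator w (x*y) z + associator w x (y*z)
   = w * associator x y z + associator w x y * (z::'a::nonassoc_ring)"
  unfolding associator_def by (simp add: na_simps algebra_simps)

lemma e_prod_left: "e*(x*y) = (e*x)*y + (x*e)*y - x*((e::'a::alternative_ring)*y)"
proof -
  have "associator e x y = - associator x e y" by (rule assoc_swap12)
  thus ?thesis unfolding associator_def by (simp add: algebra_simps)
qed

lemma e_prod_right: "(x*y)*e = x*(y*e) - (x*e)*y + x*((e::'a::alternative_ring)*y)"
proof -
  have "associator x y e = - associator x e y" by (rule assoc_swap23)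
  thus ?thesis unfolding associator_def by (simp add: algebra_simps)
qed

lemma moufang_aux:
  fixes a b c :: "'a::alternative_ring"
  shows "associator (a*b) a c + associator (a*c) a b = 0"
    and "associator (b*a) a c + associator (c*a) a b = 0"
proof -
  define A1 where "A1 = associator (a*a) b c"
  define A2 where "A2 = associator (a*b) a c"
  define A3 where "A3 = associator (b*a) a c"
  define A4 where "A4 = associator (a*c) a b"
  define A5 where "A5 = associator (c*a) a b"
  define P1 where "P1 = a * associator a b c"
  define P2 where "P2 = associator a b c * a"
  have eq1: "A1 + A2 = P1"
  proof -
    have "associator (a*a) b c - associator a (a*b) c + associator a a (b*c) = a * associator a b c + associator a a b * c"
      by (rule teich)
    moreover have "associator a (a*b) c = - A2" unfolding A2_def by (rule assoc_swap12)
    ultimately show ?thesis unfolding A1_def P1_def by (simp add: assoc_xxy na_simps)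
  qed
  have eq2: "A1 - A5 = P2"
  proof -
    have "associator (b*c) a a - associator b (c*a) a + associator b c (a*a) = b * associator c a a + associator b c a * a"
      by (rule teich)
    moreover have "associator b (c*a) a = A5" unfolding A5_def by (rule assoc_cyc)
    moreover have "associator b c (a*a) = A1" unfolding A1_def
      using assoc_cyc[of b c "a*a"] assoc_cyc[of c "a*a" b] by simp
    moreover have "associator b c a = associator a b c" using assoc_cyc[of a b c] by simp
    ultimately show ?thesis unfolding P2_def by (simp add: assoc_yxx na_simps algebra_simps)
  qed
  have eq4: "A4 + A5 + A2 = P1"
  proof -
    have "associator (a*c) a b - associator a (c*a) b + associator a c (a*b) = a * associator c a b + associator a c a * b"
      by (rule teich)
    moreover have "associator a (c*a) b = - A5" unfolding A5_def by (rule assoc_swap12)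
    moreover have "associator a c (a*b) = A2" unfolding A2_def
      using assoc_cyc[of "a*b" a c] assoc_cyc[of a c "a*b"] by simp
    moreover have "associator c a b = associator a b c" using assoc_cyc[of a b c] assoc_cyc[of b c a] by simp
    ultimately show ?thesis unfolding P1_def A4_def by (simp add: assoc_flex na_simps algebra_simps)
  qed
  have eq5: "A3 + A1 - A4 = 0"
  proof -
    have "associator (b*a) a c - associator b (a*a) c + associator b a (a*c) = b * associator a a c + associator b a a * c"
      by (rule teich)
    moreover have "associator b (a*a) c = - A1" unfolding A1_def by (rule assoc_swap12)
    moreover have "associator b a (a*c) = - A4" unfolding A4_def by (rule assoc_swap13)
    ultimately show ?thesis unfolding A3_def by (simp add: assoc_xxy assoc_yxx na_simps algebra_simps)
  qed
  have eq6: "A5 - A1 - A2 = 0"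
  proof -
    have "associator (c*a) a b - associator c (a*a) b + associator c a (a*b) = c * associator a a b + associator c a a * b"
      by (rule teich)
    moreover have "associator c (a*a) b = A1" unfolding A1_def
      using assoc_cyc[of c "a*a" b] by simp
    moreover have "associator c a (a*b) = - A2" unfolding A2_def by (rule assoc_swap13)
    ultimately show ?thesis unfolding A5_def by (simp add: assoc_xxy assoc_yxx na_simps algebra_simps)
  qed
  have h5: "A5 = A1 + A2" using eq6 by (simp add: algebra_simps)
  have h1: "A1 = P1 - A2" using eq1 by (simp add: algebra_simps)
  have h5': "A5 = P1" using h5 h1 by simp
  have h4: "A4 = P1 - A5 - A2" using eq4 by (simp add: algebra_simps)
  have h4': "A4 = - A2" using h4 h5' by simp
  have h3: "A3 = A4 - A1" using eq5 by (simp add: algebra_simps)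
  show "A2 + A4 = 0" using h4' by simp
  show "A3 + A5 = 0" using h3 h4' h1 h5' by simp
qed


lemma moufang_left: "((a*b)*a)*c = a*(b*(a*(c::'a::alternative_ring)))"
proof -
  have h1: "((a*b)*a)*c = associator (a*b) a c + (a*b)*(a*c)" unfolding associator_def by simp
  have h2: "a*(b*(a*c)) = (a*b)*(a*c) - associator a b (a*c)" unfolding associator_def by simp
  have h3: "associator a b (a*c) = associator (a*c) a b" using assoc_cyc[of "a*c" a b] by simp
  have h4: "associator (a*b) a c = - associator (a*c) a b"
    using moufang_aux(1)[where a=a and b=b and c=c] by (simp add: eq_neg_iff_add_eq_0)
  have "((a*b)*a)*c = (a*b)*(a*c) - associator (a*c) a b" using h1 h4 by simp
  also have "... = a*(b*(a*c))" using h2 h3 by simp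
  finally show ?thesis .
qed

lemma moufang_right: "c*((a*b)*a) = ((c*a)*b)*(a::'a::alternative_ring)"
proof -
  have h1: "((c*a)*b)*a = associator (c*a) b a + (c*a)*(b*a)" unfolding associator_def by simp
  have h2: "(a*b)*a = a*(b*a)" using assoc_flex[of a b] unfolding associator_def by simp
  have h3: "c*(a*(b*a)) = (c*a)*(b*a) - associator c a (b*a)" unfolding associator_def by simp
  have h4: "associator (c*a) b a = - associator (c*a) a b" by (rule assoc_swap23)
  have h5: "associator c a (b*a) = - associator (b*a) a c" by (rule assoc_swap13)
  have h6: "associator (b*a) a c = - associator (c*a) a b"
    using moufang_aux(2)[where a=a and b=b and c=c] by (simp add: eq_neg_iff_add_eq_0)
  have "c*((a*b)*a) = (c*a)*(b*a) - associator c a (b*a)" using h2 h3 by simp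
  also have "... = (c*a)*(b*a) - associator (c*a) a b" using h5 h6 by simp
  also have "... = ((c*a)*b)*a" using h1 h4 by simp
  finally show ?thesis .
qed


section \<open>Idempotent and Peirce facts\<close>

lemma e_ex: "e*e = e \<Longrightarrow> e*(e*x) = e*(x::'a::alternative_ring)"
  using assoc_xxy[of e x] unfolding associator_def by simp

lemma xe_e: "e*e = e \<Longrightarrow> (x*e)*e = x*(e::'a::alternative_ring)"
  using assoc_yxx[of x e] unfolding associator_def by simp

lemma e_xe: "e*(x*e) = (e*x)*(e::'a::alternative_ring)"
  using assoc_flex[of e x] unfolding associator_def by simp

lemma e_exe: "e*e = e \<Longrightarrow> e*((e*x)*e) = (e*x)*(e::'a::alternative_ring)"
  using e_xe[of e "e*x"] e_ex[of e x] by simp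

lemma exe_e: "e*e = e \<Longrightarrow> ((e*x)*e)*e = (e*x)*(e::'a::alternative_ring)"
  using xe_e[of e "e*x"] by simp

lemma mem12: "e*e = e \<Longrightarrow> x \<in> peirce e 1 2 \<longleftrightarrow> e*x = x \<and> x*(e::'a::alternative_ring) = 0"
proof
  assume ee: "e*e = e" and "x \<in> peirce e 1 2"
  then obtain z where x: "x = e*z - (e*z)*e" unfolding peirce_def peirce_left_def peirce_right_def by auto
  show "e*x = x \<and> x*e = 0" unfolding x using ee by (simp add: na_simps e_ex e_exe exe_e)
next
  assume ee: "e*e = e" and h: "e*x = x \<and> x*e = 0"
  hence "x = peirce_right 2 e (peirce_left 1 e x)" unfolding peirce_left_def peirce_right_def by simp
  thus "x \<in> peirce e 1 2" unfolding peirce_def by blast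
qed

lemma mem21: "e*e = e \<Longrightarrow> x \<in> peirce e 2 1 \<longleftrightarrow> e*x = 0 \<and> x*(e::'a::alternative_ring) = x"
proof
  assume ee: "e*e = e" and "x \<in> peirce e 2 1"
  then obtain z where x: "x = (z - e*z)*e" unfolding peirce_def peirce_left_def peirce_right_def by auto
  show "e*x = 0 \<and> x*e = x" unfolding x using ee by (simp add: na_simps e_ex e_exe exe_e e_xe xe_e)
next
  assume ee: "e*e = e" and h: "e*x = 0 \<and> x*e = x"
  hence "x = peirce_right 1 e (peirce_left 2 e x)" unfolding peirce_left_def peirce_right_def by simp
  thus "x \<in> peirce e 2 1" unfolding peirce_def by blast
qed

lemma mem11I: "e*x = x \<Longrightarrow> x*e = x \<Longrightarrow> x \<in> peirce e 1 1"
proof -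
  assume h: "e*x = x" "x*e = x"
  hence "x = peirce_right 1 e (peirce_left 1 e x)" unfolding peirce_left_def peirce_right_def by simp
  thus "x \<in> peirce e 1 1" unfolding peirce_def by blast
qed

lemma mem22I: "e*x = 0 \<Longrightarrow> x*e = 0 \<Longrightarrow> x \<in> peirce e 2 2"
proof -
  assume h: "e*x = 0" "x*e = 0"
  hence "x = peirce_right 2 e (peirce_left 2 e x)" unfolding peirce_left_def peirce_right_def by simp
  thus "x \<in> peirce e 2 2" unfolding peirce_def by blast
qed

text \<open>Peirce products. Notation: a in R11 (ea=a=ae), b in R22, x,x' in R12, y,y' in R21.\<close>

lemma p11_21: "e*a = a \<Longrightarrow> a*e = a \<Longrightarrow> e*y = 0 \<Longrightarrow> a*(y::'a::alternative_ring) = 0"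
  using moufang_left[of e a y] by (simp add: na_simps)

lemma p21_22: "e*b = 0 \<Longrightarrow> b*e = 0 \<Longrightarrow> y*e = y \<Longrightarrow> y*(b::'a::alternative_ring) = 0"
  using moufang_right[of y e b] e_prod_right[of y b e] by (simp add: na_simps)

lemma p12_11: "e*a = a \<Longrightarrow> a*e = a \<Longrightarrow> x*e = 0 \<Longrightarrow> x*(a::'a::alternative_ring) = 0"
  using moufang_right[of x e a] by (simp add: na_simps)

lemma p22_12: "e*b = 0 \<Longrightarrow> b*e = 0 \<Longrightarrow> e*x = x \<Longrightarrow> b*(x::'a::alternative_ring) = 0"
  using moufang_left[of e b x] e_prod_left[of e b x] by (simp add: na_simps)

lemma p21_11: "e*a = a \<Longrightarrow> a*e = a \<Longrightarrow> e*y = 0 \<Longrightarrow> y*e = y \<Longrightarrow>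
   e*(y*a) = 0 \<and> (y*a)*(e::'a::alternative_ring) = y*a"
  using e_prod_left[of e y a] e_prod_right[of y a e] by (simp add: na_simps)

lemma p22_21: "e*b = 0 \<Longrightarrow> b*e = 0 \<Longrightarrow> e*y = 0 \<Longrightarrow> y*e = y \<Longrightarrow>
   e*(b*y) = 0 \<and> (b*y)*(e::'a::alternative_ring) = b*y"
  using e_prod_left[of e b y] e_prod_right[of b y e] by (simp add: na_simps)

lemma p11_12: "e*a = a \<Longrightarrow> a*e = a \<Longrightarrow> e*x = x \<Longrightarrow> x*e = 0 \<Longrightarrow>
   e*(a*x) = a*x \<and> (a*x)*(e::'a::alternative_ring) = 0"
  using e_prod_left[of e a x] e_prod_right[of a x e] by (simp add: na_simps)

lemma p12_22: "e*b = 0 \<Longrightarrow> b*e = 0 \<Longrightarrow> e*x = x \<Longrightarrow> x*e = 0 \<Longrightarrow>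
   e*(x*b) = x*b \<and> (x*b)*(e::'a::alternative_ring) = 0"
  using e_prod_left[of e x b] e_prod_right[of x b e] by (simp add: na_simps)

lemma p12_21: "e*x = x \<Longrightarrow> x*e = 0 \<Longrightarrow> e*y = 0 \<Longrightarrow> y*e = y \<Longrightarrow>
   e*(x*y) = x*y \<and> (x*y)*(e::'a::alternative_ring) = x*y"
  using e_prod_left[of e x y] e_prod_right[of x y e] by (simp add: na_simps)

lemma p21_12: "e*x = x \<Longrightarrow> x*e = 0 \<Longrightarrow> e*y = 0 \<Longrightarrow> y*e = y \<Longrightarrow>
   e*(y*x) = 0 \<and> (y*x)*(e::'a::alternative_ring) = 0"
  using e_prod_left[of e y x] e_prod_right[of y x e] by (simp add: na_simps)

lemma p12_12: "e*x = x \<Longrightarrow> x*e = 0 \<Longrightarrow> e*x' = x' \<Longrightarrow> x'*e = 0 \<Longrightarrow>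
   e*(x*x') = 0 \<and> (x*x')*(e::'a::alternative_ring) = x*x'"
  using e_prod_left[of e x x'] e_prod_right[of x x' e] by (simp add: na_simps)

lemma p21_21: "e*y = 0 \<Longrightarrow> y*e = y \<Longrightarrow> e*y' = 0 \<Longrightarrow> y'*e = y' \<Longrightarrow>
   e*(y*y') = y*y' \<and> (y*y')*(e::'a::alternative_ring) = 0"
  using e_prod_left[of e y y'] e_prod_right[of y y' e] by (simp add: na_simps)


section \<open>Commutators and iterated commutators\<close>

lemma comm_add_left: "commutator (u+v) x = commutator u x + commutator v (x::'a::nonassoc_ring)"
  unfolding commutator_def by (simp add: na_simps algebra_simps)
lemma comm_add_right: "commutator x (u+v) = commutator x u + commutator x (v::'a::nonassoc_ring)"
  unfolding commutator_def by (simp add: na_simps algebra_simps)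
lemma comm_diff_left: "commutator (u-v) x = commutator u x - commutator v (x::'a::nonassoc_ring)"
  unfolding commutator_def by (simp add: na_simps algebra_simps)
lemma comm_diff_right: "commutator x (u-v) = commutator x u - commutator x (v::'a::nonassoc_ring)"
  unfolding commutator_def by (simp add: na_simps algebra_simps)
lemma comm_minus_left: "commutator (-u) x = - commutator u (x::'a::nonassoc_ring)"
  unfolding commutator_def by (simp add: na_simps algebra_simps)
lemma comm_minus_right: "commutator x (-u) = - commutator x (u::'a::nonassoc_ring)"
  unfolding commutator_def by (simp add: na_simps algebra_simps)
lemma comm_zero_left: "commutator 0 (x::'a::nonassoc_ring) = 0"
  unfolding commutator_def by (simp add: na_simps)
lemma comm_zero_right: "commutator (x::'a::nonassoc_ring) 0 = 0"
  unfolding commutator_def by (simp add: na_simps)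
lemma comm_self: "commutator (x::'a::nonassoc_ring) x = 0"
  unfolding commutator_def by simp
lemma comm_swap: "commutator x (y::'a::nonassoc_ring) = - commutator y x"
  unfolding commutator_def by simp

lemmas comm_simps = comm_add_left comm_add_right comm_diff_left comm_diff_right
  comm_minus_left comm_minus_right comm_zero_left comm_zero_right comm_self

lemma foldl_comm_add: "foldl commutator (u+v) L = foldl commutator u L + foldl commutator (v::'a::nonassoc_ring) L"
  by (induction L arbitrary: u v) (simp_all add: comm_add_left)

lemma foldl_comm_zero: "foldl commutator (0::'a::nonassoc_ring) L = 0"
  by (induction L) (simp_all add: comm_zero_left)

lemma foldl_comm_minus: "foldl commutator (-u) L = - foldl commutator (u::'a::nonassoc_ring) L"
proof -
  have "foldl commutator (-u) L + foldl commutator u L = 0"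
    using foldl_comm_add[of "-u" u L] by (simp add: foldl_comm_zero)
  thus ?thesis by (simp add: eq_neg_iff_add_eq_0)
qed

lemma foldl_comm_diff: "foldl commutator (u-v) L = foldl commutator u L - foldl commutator (v::'a::nonassoc_ring) L"
  using foldl_comm_add[of u "-v" L] foldl_comm_minus[of v L] by simp

definition adp :: "'a::nonassoc_ring \<Rightarrow> nat \<Rightarrow> 'a \<Rightarrow> 'a" where
  "adp e k w = foldl commutator w (replicate k e)"

definition Gs :: "'a::nonassoc_ring \<Rightarrow> 'a \<Rightarrow> nat \<Rightarrow> 'a \<Rightarrow> 'a" where
  "Gs e d k w = (\<Sum>j<k. foldl commutator w ((replicate k e)[j := d]))"

lemma adp_add: "adp e k (u+v) = adp e k u + adp e k v"
  unfolding adp_def by (rule foldl_comm_add)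
lemma adp_diff: "adp e k (u-v) = adp e k u - adp e k v"
  unfolding adp_def by (rule foldl_comm_diff)
lemma adp_minus: "adp e k (-u) = - adp e k u"
  unfolding adp_def by (rule foldl_comm_minus)
lemma adp_zero: "adp e k 0 = 0"
  unfolding adp_def by (rule foldl_comm_zero)
lemma adp_Suc: "adp e (Suc k) w = adp e k (commutator w e)"
  unfolding adp_def by simp

lemma Gs_add: "Gs e d k (u+v) = Gs e d k u + Gs e d k v"
  unfolding Gs_def by (simp add: foldl_comm_add sum.distrib)
lemma Gs_diff: "Gs e d k (u-v) = Gs e d k u - Gs e d k v"
  unfolding Gs_def by (simp add: foldl_comm_diff sum_subtractf)
lemma Gs_zero: "Gs e d k 0 = 0"
  unfolding Gs_def by (simp add: foldl_comm_zero)

definition sg :: "nat \<Rightarrow> 'a::ab_group_add \<Rightarrow> 'a" where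
  "sg k x = (if even k then x else - x)"

lemma sg_sg: "sg k (sg k x) = x" unfolding sg_def by simp
lemma sg_minus: "sg k (-x) = - sg k x" unfolding sg_def by simp
lemma sg_add: "sg k (x+y) = sg k x + sg k y" unfolding sg_def by simp
lemma sg_zero_iff: "sg k x = 0 \<longleftrightarrow> x = 0" unfolding sg_def by simp

lemma adp12: "e*x = x \<Longrightarrow> x*e = 0 \<Longrightarrow> adp e k x = sg k (x::'a::nonassoc_ring)"
proof (induction k)
  case 0 thus ?case by (simp add: adp_def sg_def)
next
  case (Suc k)
  have "commutator x e = -x" using Suc.prems unfolding commutator_def by simp
  hence "adp e (Suc k) x = - adp e k x" by (simp add: adp_Suc adp_minus)
  thus ?case using Suc by (simp add: sg_def)
qed

lemma adp21: "e*y = 0 \<Longrightarrow> y*e = y \<Longrightarrow> adp e k y = (y::'a::nonassoc_ring)"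
proof (induction k)
  case 0 thus ?case by (simp add: adp_def)
next
  case (Suc k)
  have "commutator y e = y" using Suc.prems unfolding commutator_def by simp
  thus ?case using Suc by (simp add: adp_Suc)
qed

lemma adp_diag: "commutator w e = 0 \<Longrightarrow> 1 \<le> k \<Longrightarrow> adp e k (w::'a::nonassoc_ring) = 0"
  by (cases k) (simp_all add: adp_Suc adp_zero)

section \<open>Derivation identities\<close>

lemma LD:
  assumes "mult_lie_n_derivation (Suc (Suc k)) D"
  shows "D (adp e k (commutator x1 x2)) = adp e k (commutator (D x1) x2) + adp e k (commutator x1 (D x2))
           + Gs e (D e) k (commutator x1 x2)"
proof -
  let ?xs = "x1 # x2 # replicate k e"
  have len: "length ?xs = Suc (Suc k)" by simp
  from assms len have eq: "D (lie_poly ?xs) = (\<Sum>i<Suc (Suc k). lie_poly (?xs[i := D (?xs ! i)]))"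
    unfolding mult_lie_n_derivation_def by blast
  have l: "lie_poly ?xs = adp e k (commutator x1 x2)" by (simp add: lie_poly_def adp_def)
  have s: "(\<Sum>i<Suc (Suc k). lie_poly (?xs[i := D (?xs ! i)])) =
      lie_poly (?xs[0 := D (?xs ! 0)]) + (lie_poly (?xs[Suc 0 := D (?xs ! Suc 0)]) +
        (\<Sum>j<k. lie_poly (?xs[Suc (Suc j) := D (?xs ! Suc (Suc j))])))"
    by (simp only: sum.lessThan_Suc_shift)
  have s0: "lie_poly (?xs[0 := D (?xs ! 0)]) = adp e k (commutator (D x1) x2)"
    by (simp add: lie_poly_def adp_def)
  have s1: "lie_poly (?xs[Suc 0 := D (?xs ! Suc 0)]) = adp e k (commutator x1 (D x2))"
    by (simp add: lie_poly_def adp_def)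
  have s2: "(\<Sum>j<k. lie_poly (?xs[Suc (Suc j) := D (?xs ! Suc (Suc j))])) = Gs e (D e) k (commutator x1 x2)"
    unfolding Gs_def by (rule sum.cong) (simp_all add: lie_poly_def)
  show ?thesis using eq l s s0 s1 s2 by (simp add: add.assoc)
qed

lemma lie2_3:
  assumes "mult_lie_n_derivation 2 D"
  shows "mult_lie_n_derivation 3 D"
proof -
  have D2: "D (commutator u v) = commutator (D u) v + commutator u (D v)" for u v
  proof -
    have l2: "length [u,v] = 2" by simp
    have "D (lie_poly [u,v]) = (\<Sum>i<2. lie_poly ([u,v][i := D ([u,v] ! i)]))"
      using assms[unfolded mult_lie_n_derivation_def, rule_format, OF l2] .
    thus ?thesis by (simp add: lie_poly_def numeral_2_eq_2)
  qed
  show ?thesis unfolding mult_lie_n_derivation_def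
  proof (intro allI impI)
    fix xs :: "'a list" assume "length xs = 3"
    hence "length xs = Suc (Suc (Suc 0))" by simp
    then obtain x1 x2 x3 where xs: "xs = [x1,x2,x3]"
      by (auto simp: length_Suc_conv)
    have "D (lie_poly xs) = D (commutator (commutator x1 x2) x3)" by (simp add: xs lie_poly_def)
    also have "... = commutator (commutator (D x1) x2) x3 + commutator (commutator x1 (D x2)) x3
                     + commutator (commutator x1 x2) (D x3)"
      by (simp add: D2 comm_add_left)
    also have "... = (\<Sum>i<3. lie_poly (xs[i := D (xs ! i)]))"
      by (simp add: xs lie_poly_def numeral_3_eq_3 add.assoc)
    finally show "D (lie_poly xs) = (\<Sum>i<3. lie_poly (xs[i := D (xs ! i)]))" .
  qed
qed


lemma cen_left: "z \<in> center \<Longrightarrow> commutator z w = 0"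
  unfolding center_def by blast
lemma cen_right: "z \<in> center \<Longrightarrow> commutator w z = (0::'a::nonassoc_ring)"
  unfolding center_def using comm_swap[of w z] by simp

lemma sg12: "e*x = x \<Longrightarrow> x*e = 0 \<Longrightarrow> e*(sg k x) = sg k x \<and> (sg k x)*e = (0::'a::nonassoc_ring)"
  by (simp add: sg_def na_simps)

locale lieset =
  fixes e :: "'a::alternative_ring" and D :: "'a \<Rightarrow> 'a" and k :: nat
  assumes ee: "e*e = e" and k1: "1 \<le> k" and der: "mult_lie_n_derivation (Suc (Suc k)) D"
    and ci: "\<And>a11 a22. a11 \<in> peirce e 1 1 \<Longrightarrow> a22 \<in> peirce e 2 2 \<Longrightarrow>
        (\<forall>x \<in> peirce e 1 2. commutator (a11 + a22) x = 0) \<Longrightarrow> a11 + a22 \<in> center"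
    and cii: "\<And>a11 a22. a11 \<in> peirce e 1 1 \<Longrightarrow> a22 \<in> peirce e 2 2 \<Longrightarrow>
        (\<forall>x \<in> peirce e 2 1. commutator (a11 + a22) x = 0) \<Longrightarrow> a11 + a22 \<in> center"
begin

lemma LDk: "D (adp e k (commutator x1 x2)) = adp e k (commutator (D x1) x2) + adp e k (commutator x1 (D x2))
           + Gs e (D e) k (commutator x1 x2)"
  by (rule LD[OF der])

lemma D0: "D 0 = 0"
  using LDk[of 0 0] by (simp add: comm_simps adp_zero Gs_zero)

lemma K1: "D (adp e k (commutator (u+v) x)) = D (adp e k (commutator u x)) + D (adp e k (commutator v x))
     + adp e k (commutator (D (u+v) - D u - D v) x)"
  using LDk[of "u+v" x] LDk[of u x] LDk[of v x]
  by (simp add: comm_simps adp_add adp_diff Gs_add algebra_simps)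

lemma K12:
  assumes cu: "D (u1+u2) - D u1 - D u2 \<in> center" and cv: "D (v1+v2) - D v1 - D v2 \<in> center"
  shows "D (adp e k (commutator (u1+u2) (v1+v2))) = D (adp e k (commutator u1 v1)) + D (adp e k (commutator u1 v2))
     + D (adp e k (commutator u2 v1)) + D (adp e k (commutator u2 v2))"
proof -
  define Zu where "Zu = D (u1+u2) - D u1 - D u2"
  define Zv where "Zv = D (v1+v2) - D v1 - D v2"
  have du: "D (u1+u2) = D u1 + D u2 + Zu" unfolding Zu_def by simp
  have dv: "D (v1+v2) = D v1 + D v2 + Zv" unfolding Zv_def by simp
  have zu: "commutator Zu w = 0" for w using cu unfolding Zu_def by (rule cen_left)
  have zv: "commutator w Zv = 0" for w using cv unfolding Zv_def by (rule cen_right)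
  show ?thesis
    using LDk[of "u1+u2" "v1+v2"] LDk[of u1 v1] LDk[of u1 v2] LDk[of u2 v1] LDk[of u2 v2]
    by (simp add: du dv zu zv comm_simps adp_add Gs_add algebra_simps)
qed

lemma Zdiag:
  assumes h: "adp e k (commutator Z e) = 0"
  obtains Z1 Z2 where "Z = Z1 + Z2" "e*Z1 = Z1" "Z1*e = Z1" "e*Z2 = 0" "Z2*e = 0"
proof -
  define p where "p = e*Z - (e*Z)*e"
  define q where "q = Z*e - (e*Z)*e"
  have p1: "e*p = p" "p*e = 0" unfolding p_def using ee by (simp_all add: na_simps e_ex e_exe exe_e)
  have q1: "e*q = 0" "q*e = q" unfolding q_def using ee by (simp_all add: na_simps e_xe xe_e e_exe exe_e e_ex)
  have "commutator Z e = q - p" unfolding commutator_def p_def q_def by (simp add: algebra_simps)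
  hence "q - sg k p = 0" using h adp12[OF p1] adp21[OF q1] by (simp add: adp_diff)
  hence "e*(q - sg k p) = 0" by (simp add: na_simps)
  hence "sg k p = 0" using q1 sg12[OF p1, of k] by (simp add: na_simps)
  hence p0: "p = 0" by (simp add: sg_zero_iff)
  with \<open>q - sg k p = 0\<close> have q0: "q = 0" by (simp add: sg_def)
  show ?thesis
  proof (rule that[of "(e*Z)*e" "Z - (e*Z)*e"])
    show "Z = e * Z * e + (Z - e * Z * e)" by simp
    show "e * (e * Z * e) = e * Z * e" using ee by (rule e_exe)
    show "e * Z * e * e = e * Z * e" using ee by (rule exe_e)
    show "e * (Z - e * Z * e) = 0" using p0 ee unfolding p_def by (simp add: na_simps e_exe e_ex)
    show "(Z - e * Z * e) * e = 0" using q0 ee unfolding q_def by (simp add: na_simps exe_e)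
  qed
qed

lemma cent12:
  assumes x1: "e*x = x" and x2: "x*e = 0"
  shows "D (e + x) - D e - D x \<in> center"
proof -
  define Z where "Z = D (e + x) - D e - D x"
  have "adp e k (commutator Z e) = 0"
    using K1[of e x e] unfolding Z_def by (simp add: comm_simps D0 adp_zero)
  then obtain Z1 Z2 where zz: "Z = Z1 + Z2" "e*Z1 = Z1" "Z1*e = Z1" "e*Z2 = 0" "Z2*e = 0"
    by (rule Zdiag)
  have cz: "commutator Z y = 0" if y1: "e*y = 0" and y2: "y*e = y" for y
  proof -
    have xy: "commutator (commutator x y) e = 0"
      using p12_21[OF x1 x2 y1 y2] p21_12[OF x1 x2 y1 y2] unfolding commutator_def by (simp add: na_simps)
    hence a0: "adp e k (commutator x y) = 0" using k1 by (rule adp_diag)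
    have "adp e k (commutator Z y) = 0"
      using K1[of e x y] a0 unfolding Z_def by (simp add: comm_simps D0 adp_add)
    moreover have "commutator Z y = Z2*y - y*Z1"
      using zz p11_21[OF zz(2) zz(3) y1] p21_22[OF zz(4) zz(5) y2]
      unfolding commutator_def by (simp add: na_simps algebra_simps)
    moreover have "e*(Z2*y - y*Z1) = 0" "(Z2*y - y*Z1)*e = Z2*y - y*Z1"
      using p22_21[OF zz(4) zz(5) y1 y2] p21_11[OF zz(2) zz(3) y1 y2] by (simp_all add: na_simps)
    ultimately show ?thesis using adp21[of e "Z2*y - y*Z1" k] by simp
  qed
  have "Z1 + Z2 \<in> center"
  proof (rule cii)
    show "Z1 \<in> peirce e 1 1" using mem11I[OF zz(2) zz(3)] .
    show "Z2 \<in> peirce e 2 2" using mem22I[OF zz(4) zz(5)] .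
    show "\<forall>y\<in>peirce e 2 1. commutator (Z1 + Z2) y = 0" using cz zz(1) mem21[OF ee] by auto
  qed
  thus ?thesis using zz(1) unfolding Z_def by simp
qed

lemma cent21:
  assumes y1: "e*y = 0" and y2: "y*e = y"
  shows "D (e + y) - D e - D y \<in> center"
proof -
  define Z where "Z = D (e + y) - D e - D y"
  have "adp e k (commutator Z e) = 0"
    using K1[of e y e] unfolding Z_def by (simp add: comm_simps D0 adp_zero)
  then obtain Z1 Z2 where zz: "Z = Z1 + Z2" "e*Z1 = Z1" "Z1*e = Z1" "e*Z2 = 0" "Z2*e = 0"
    by (rule Zdiag)
  have cz: "commutator Z x = 0" if x1: "e*x = x" and x2: "x*e = 0" for x
  proof -
    have xy: "commutator (commutator y x) e = 0"
      using p12_21[OF x1 x2 y1 y2] p21_12[OF x1 x2 y1 y2] unfolding commutator_def by (simp add: na_simps)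
    hence a0: "adp e k (commutator y x) = 0" using k1 by (rule adp_diag)
    have "adp e k (commutator Z x) = 0"
      using K1[of e y x] a0 unfolding Z_def by (simp add: comm_simps D0 adp_add)
    moreover have "commutator Z x = Z1*x - x*Z2"
      using zz p22_12[OF zz(4) zz(5) x1] p12_11[OF zz(2) zz(3) x2]
      unfolding commutator_def by (simp add: na_simps algebra_simps)
    moreover have w: "e*(Z1*x - x*Z2) = Z1*x - x*Z2" "(Z1*x - x*Z2)*e = 0"
      using p11_12[OF zz(2) zz(3) x1 x2] p12_22[OF zz(4) zz(5) x1 x2] by (simp_all add: na_simps)
    ultimately show ?thesis using adp12[OF w, of k] by (simp add: sg_zero_iff)
  qed
  have "Z1 + Z2 \<in> center"
  proof (rule ci)
    show "Z1 \<in> peirce e 1 1" using mem11I[OF zz(2) zz(3)] .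
    show "Z2 \<in> peirce e 2 2" using mem22I[OF zz(4) zz(5)] .
    show "\<forall>x\<in>peirce e 1 2. commutator (Z1 + Z2) x = 0" using cz zz(1) mem12[OF ee] by auto
  qed
  thus ?thesis using zz(1) unfolding Z_def by simp
qed

lemma L2:
  assumes x1: "e*x = x" and x2: "x*e = 0" and y1: "e*y = 0" and y2: "y*e = y"
  shows "D (x + y) = D x + D y"
proof -
  define x0 where "x0 = - sg k x"
  define y0 where "y0 = - y"
  have x0m: "e*x0 = x0" "x0*e = 0" unfolding x0_def using sg12[OF x1 x2, of k] by (simp_all add: na_simps)
  have y0m: "e*y0 = 0" "y0*e = y0" unfolding y0_def using y1 y2 by (simp_all add: na_simps)
  have K: "D (adp e k (commutator (e+x0) (e+y0))) = D (adp e k (commutator e e)) + D (adp e k (commutator e y0))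
     + D (adp e k (commutator x0 e)) + D (adp e k (commutator x0 y0))"
    by (rule K12[OF cent12[OF x0m] cent21[OF y0m]])
  have c1: "adp e k (commutator e y0) = y"
    using y1 y2 adp21[OF y1 y2, of k] unfolding y0_def commutator_def by (simp add: na_simps)
  have c2: "adp e k (commutator x0 e) = x"
  proof -
    have "commutator x0 e = sg k x" using x0m unfolding x0_def commutator_def by simp
    moreover have sx: "e*(sg k x) = sg k x" "(sg k x)*e = 0" using sg12[OF x1 x2, of k] by auto
    ultimately show ?thesis using adp12[OF sx] by (simp add: sg_sg)
  qed
  have c3: "adp e k (commutator x0 y0) = 0"
  proof (rule adp_diag[OF _ k1])
    show "commutator (commutator x0 y0) e = 0"
      using p12_21[OF x0m y0m] p21_12[OF x0m y0m] unfolding commutator_def by (simp add: na_simps)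
  qed
  have c4: "adp e k (commutator (e+x0) (e+y0)) = y + x"
    using c1 c2 c3 by (simp add: comm_simps adp_add adp_zero)
  show ?thesis using K c1 c2 c3 c4 by (simp add: comm_simps adp_zero D0 add.commute)
qed

lemma add12:
  assumes a1: "e*a = a" and a2: "a*e = 0" and b1: "e*b = b" and b2: "b*e = 0"
  shows "D (a + b) = D a + D b"
proof -
  define a0 where "a0 = - sg k a"
  define b0 where "b0 = sg k b"
  have a0m: "e*a0 = a0" "a0*e = 0" unfolding a0_def using sg12[OF a1 a2, of k] by (simp_all add: na_simps)
  have b0m: "e*b0 = b0" "b0*e = 0" unfolding b0_def using sg12[OF b1 b2, of k] by (simp_all add: na_simps)
  have K: "D (adp e k (commutator (e+a0) (e+b0))) = D (adp e k (commutator e e)) + D (adp e k (commutator e b0))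
     + D (adp e k (commutator a0 e)) + D (adp e k (commutator a0 b0))"
    by (rule K12[OF cent12[OF a0m] cent12[OF b0m]])
  have c1: "adp e k (commutator e b0) = b"
  proof -
    have "commutator e b0 = b0" using b0m unfolding commutator_def by simp
    thus ?thesis using adp12[OF b0m, of k] unfolding b0_def by (simp add: sg_sg)
  qed
  have c2: "adp e k (commutator a0 e) = a"
  proof -
    have "commutator a0 e = sg k a" using a0m unfolding a0_def commutator_def by simp
    moreover have sx: "e*(sg k a) = sg k a" "(sg k a)*e = 0" using sg12[OF a1 a2, of k] by auto
    ultimately show ?thesis using adp12[OF sx] by (simp add: sg_sg)
  qed
  define c where "c = commutator a0 b0"
  have cm: "e*c = 0" "c*e = c"
    using p12_12[OF a0m b0m] p12_12[OF b0m a0m] unfolding c_def commutator_def by (simp_all add: na_simps)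
  have c3: "adp e k (commutator a0 b0) = c" using adp21[OF cm, of k] unfolding c_def .
  have c4: "adp e k (commutator (e+a0) (e+b0)) = b + a + c"
    using c1 c2 c3 by (simp add: comm_simps adp_add adp_zero)
  have "D (b + a + c) = D b + D a + D c" using K c1 c2 c3 c4 by (simp add: comm_simps adp_zero D0)
  moreover have "D ((b + a) + c) = D (b + a) + D c"
  proof (rule L2)
    show "e * (b + a) = b + a" "(b + a) * e = 0" using a1 a2 b1 b2 by (simp_all add: na_simps)
  qed (use cm in auto)
  ultimately show ?thesis by (simp add: add.commute)
qed

lemma add21:
  assumes y1: "e*y = 0" and y2: "y*e = y" and z1: "e*z = 0" and z2: "z*e = z"
  shows "D (y + z) = D y + D z"
proof -
  define z0 where "z0 = - z"
  have z0m: "e*z0 = 0" "z0*e = z0" unfolding z0_def using z1 z2 by (simp_all add: na_simps)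
  have K: "D (adp e k (commutator (e+y) (e+z0))) = D (adp e k (commutator e e)) + D (adp e k (commutator e z0))
     + D (adp e k (commutator y e)) + D (adp e k (commutator y z0))"
    by (rule K12[OF cent21[OF y1 y2] cent21[OF z0m]])
  have c1: "adp e k (commutator e z0) = z"
  proof -
    have "commutator e z0 = z" using z0m unfolding z0_def commutator_def by simp
    thus ?thesis using adp21[OF z1 z2, of k] by simp
  qed
  have c2: "adp e k (commutator y e) = y"
  proof -
    have "commutator y e = y" using y1 y2 unfolding commutator_def by simp
    thus ?thesis using adp21[OF y1 y2, of k] by simp
  qed
  define c where "c = commutator y z0"
  have cm: "e*c = c" "c*e = 0"
    using p21_21[OF y1 y2 z0m] p21_21[OF z0m y1 y2] unfolding c_def commutator_def by (simp_all add: na_simps)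
  have c3: "adp e k (commutator y z0) = sg k c" using adp12[OF cm, of k] unfolding c_def .
  have c4: "adp e k (commutator (e+y) (e+z0)) = z + y + sg k c"
    using c1 c2 c3 by (simp add: comm_simps adp_add adp_zero)
  have "D (z + y + sg k c) = D z + D y + D (sg k c)" using K c1 c2 c3 c4 by (simp add: comm_simps adp_zero D0)
  moreover have "D (sg k c + (z + y)) = D (sg k c) + D (z + y)"
  proof (rule L2)
    show "e * (z + y) = 0" "(z + y) * e = z + y" using y1 y2 z1 z2 by (simp_all add: na_simps)
  qed (use sg12[OF cm, of k] in auto)
  ultimately show ?thesis by (simp add: add.commute add.left_commute)
qed

end

theorem lemma2p4:
  fixes e1 :: "'a::alternative_ring" and D :: "'a \<Rightarrow> 'a"
  assumes idem: "nontrivial_idempotent e1"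
    and cond_i: "\<And>a11 a22. a11 \<in> peirce e1 1 1 \<Longrightarrow> a22 \<in> peirce e1 2 2 \<Longrightarrow>
        (\<forall>x \<in> peirce e1 1 2. commutator (a11 + a22) x = 0) \<Longrightarrow> a11 + a22 \<in> center"
    and cond_ii: "\<And>a11 a22. a11 \<in> peirce e1 1 1 \<Longrightarrow> a22 \<in> peirce e1 2 2 \<Longrightarrow>
        (\<forall>x \<in> peirce e1 2 1. commutator (a11 + a22) x = 0) \<Longrightarrow> a11 + a22 \<in> center"
    and D: "mult_lie_type_derivation D"
  shows "\<forall>i \<in> {1,2}. \<forall>j \<in> {1,2}. i \<noteq> j \<longrightarrow>
           (\<forall>a \<in> peirce e1 i j. \<forall>b \<in> peirce e1 i j. D (a + b) = D a + D b)"
proof -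
  have ee: "e1 * e1 = e1" using idem unfolding nontrivial_idempotent_def by blast
  obtain n where n2: "n \<ge> 2" and dn: "mult_lie_n_derivation n D"
    using D unfolding mult_lie_type_derivation_def by blast
  obtain m where m3: "m \<ge> 3" and dm: "mult_lie_n_derivation m D"
  proof (cases "n = 2")
    case True
    thus ?thesis using that[of 3] lie2_3[of D] dn by simp
  next
    case False
    thus ?thesis using that[of n] n2 dn by simp
  qed
  define k where "k = m - 2"
  have mk: "m = Suc (Suc k)" using m3 unfolding k_def by simp
  interpret L: lieset e1 D k
  proof
    show "e1 * e1 = e1" by (rule ee)
    show "1 \<le> k" using m3 unfolding k_def by simp
    show "mult_lie_n_derivation (Suc (Suc k)) D" using dm mk by simp
  qed (fact cond_i, fact cond_ii)
  show ?thesis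
  proof (intro ballI impI)
    fix i j a b
    assume i: "i \<in> {1::nat, 2}" and j: "j \<in> {1::nat, 2}" and ij: "i \<noteq> j"
      and a: "a \<in> peirce e1 i j" and b: "b \<in> peirce e1 i j"
    from i j ij have "(i = 1 \<and> j = 2) \<or> (i = 2 \<and> j = 1)" by auto
    thus "D (a + b) = D a + D b"
    proof
      assume "i = 1 \<and> j = 2"
      thus ?thesis using a b mem12[OF ee] L.add12 by auto
    next
      assume "i = 2 \<and> j = 1"
      thus ?thesis using a b mem21[OF ee] L.add21 by auto
    qed
  qed
qed

end
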